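(* Let $F$ be a field, $\{E_1,\ldots,E_t\}$ a complete symmetric orthogonal set of idempotents in $F_{n\times n}$, and $\mathbf{z}=(z_1,\ldots,z_k)$ commuting variables. For $i=1,\ldots,t$ let $w_i(\mathbf{z})=\alpha_i\prod_{j=1}^kz_j^{t_{i,j}}$ with non-negative integers $t_{i,j}$ and $\alpha_i\in F$ satisfying $|\alpha_i|^2=1$. Then $W(\mathbf{z})=\sum_{i=1}^tw_i(\mathbf{z})E_i$ is a paraunitary matrix, i.e. $W(\mathbf{z})W^*(\mathbf{z}^{-1})=1$.
   Context: For $a\in\mathbb{C}$, $a^*=\overline a$; for other fields $a^*=a$; $|a|^2=aa^*$. For matrices, $^*$ is conjugate transpose over $\mathbb{C}$ and transpose otherwise; $W^*(\mathbf{z}^{-1})$ applies $^*$ to coefficients and replaces each $z_j$ by $z_j^{-1}$. A complete symmetric orthogonal set of idempotents is $\{E_1,\ldots,E_t\}$ with $E_i\ne 0$, $E_i^2=E_i$, $E_iE_j=0$ ($i\ne j$), $\sum_iE_i=I_n$ and $E_i^*=E_i$. *)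

theory Defs
  imports "HOL-Library.Poly_Mapping" "Jordan_Normal_Form.Matrix"
begin

text \<open>Laurent polynomials in commuting variables z_0, z_1, ... over 'a:
  finitely supported maps from integer exponent vectors to coefficients,
  with the convolution product of Poly_Mapping.\<close>
type_synonym 'a lpoly = "(nat \<Rightarrow>\<^sub>0 int) \<Rightarrow>\<^sub>0 'a"

definition lconst :: "'a::zero \<Rightarrow> 'a lpoly" where
  "lconst a = Poly_Mapping.single 0 a"

definition lmonom :: "'a::zero \<Rightarrow> nat \<Rightarrow> (nat \<Rightarrow> nat) \<Rightarrow> 'a lpoly" where
  "lmonom a k e = Poly_Mapping.single (\<Sum>j<k. Poly_Mapping.single j (int (e j))) a"

text \<open>p^*(z^{-1}): apply star to coefficients and replace each z_j by z_j^{-1}.\<close>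
definition lconj :: "('a \<Rightarrow> 'a) \<Rightarrow> 'a::comm_monoid_add lpoly \<Rightarrow> 'a lpoly" where
  "lconj s p = (\<Sum>m\<in>Poly_Mapping.keys p. Poly_Mapping.single (- m) (s (Poly_Mapping.lookup p m)))"

definition mstar :: "('a \<Rightarrow> 'a) \<Rightarrow> 'a mat \<Rightarrow> 'a mat" where
  "mstar s A = mat (dim_col A) (dim_row A) (\<lambda>(i, j). s (A $$ (j, i)))"

definition paraconj :: "('a \<Rightarrow> 'a) \<Rightarrow> 'a::comm_monoid_add lpoly mat \<Rightarrow> 'a lpoly mat" where
  "paraconj s W = mat (dim_col W) (dim_row W) (\<lambda>(i, j). lconj s (W $$ (j, i)))"

definition paraunitary :: "('a \<Rightarrow> 'a) \<Rightarrow> 'a::comm_ring_1 lpoly mat \<Rightarrow> bool" where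
  "paraunitary s W \<longleftrightarrow> W * paraconj s W = 1\<^sub>m (dim_row W)"

definition msum :: "nat \<Rightarrow> nat \<Rightarrow> (nat \<Rightarrow> 'a::comm_monoid_add mat) \<Rightarrow> 'a mat" where
  "msum n t M = mat n n (\<lambda>ij. \<Sum>i<t. M i $$ ij)"

text \<open>Complete symmetric orthogonal set of idempotents E_0, ..., E_{t-1} in F_{n x n}
  with respect to the involution s.\<close>
definition csoi :: "('a::field \<Rightarrow> 'a) \<Rightarrow> nat \<Rightarrow> nat \<Rightarrow> (nat \<Rightarrow> 'a mat) \<Rightarrow> bool" where
  "csoi s n t E \<longleftrightarrow>
     (\<forall>i<t. E i \<in> carrier_mat n n \<and> E i \<noteq> 0\<^sub>m n n \<and> E i * E i = E i \<and> mstar s (E i) = E i) \<and>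
     (\<forall>i<t. \<forall>j<t. i \<noteq> j \<longrightarrow> E i * E j = 0\<^sub>m n n) \<and>
     msum n t E = 1\<^sub>m n"

definition Wmat :: "nat \<Rightarrow> nat \<Rightarrow> nat \<Rightarrow> (nat \<Rightarrow> 'a::comm_ring_1) \<Rightarrow> (nat \<Rightarrow> nat \<Rightarrow> nat)
                     \<Rightarrow> (nat \<Rightarrow> 'a mat) \<Rightarrow> 'a lpoly mat" where
  "Wmat n t k \<alpha> tt E = msum n t (\<lambda>i. lmonom (\<alpha> i) k (tt i) \<cdot>\<^sub>m map_mat lconst (E i))"

end

theory Submission
  imports Defs
begin

lemma lookup_lconj:
  assumes s0: "s 0 = 0"
  shows "Poly_Mapping.lookup (lconj s p) x = s (Poly_Mapping.lookup p (- x))"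
proof -
  have "Poly_Mapping.lookup (lconj s p) x =
    (\<Sum>m\<in>Poly_Mapping.keys p. (if m = - x then s (Poly_Mapping.lookup p m) else 0))"
    unfolding lconj_def lookup_sum lookup_single
    by (intro sum.cong) (auto simp: when_def)
  also have "\<dots> = (if - x \<in> Poly_Mapping.keys p then s (Poly_Mapping.lookup p (- x)) else 0)"
    by (simp add: sum.delta')
  also have "\<dots> = s (Poly_Mapping.lookup p (- x))"
    using s0 by (auto simp: in_keys_iff)
  finally show ?thesis .
qed

lemma lconj_sum_single:
  assumes s0: "s 0 = 0" and sadd: "\<And>a b. s (a + b) = s a + s b"
  shows "lconj s (\<Sum>i\<in>I. Poly_Mapping.single (m i) (a i)) =
         (\<Sum>i\<in>I. Poly_Mapping.single (- m i) (s (a i)))"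
proof (rule poly_mapping_eqI)
  fix x
  show "Poly_Mapping.lookup (lconj s (\<Sum>i\<in>I. Poly_Mapping.single (m i) (a i))) x =
        Poly_Mapping.lookup (\<Sum>i\<in>I. Poly_Mapping.single (- m i) (s (a i))) x"
  proof (cases "finite I")
    case True
    then show ?thesis
      unfolding lookup_lconj[of s, OF s0] lookup_sum lookup_single
    proof (induction I rule: finite_induct)
      case empty then show ?case by (simp add: s0)
    next
      case (insert i I)
      then show ?case by (auto simp: sadd when_def s0)
    qed
  next
    case False then show ?thesis by (simp add: lookup_lconj[of s, OF s0] s0)
  qed
qed

lemma sum_single: "(\<Sum>c\<in>C. Poly_Mapping.single k (f c)) = Poly_Mapping.single k (\<Sum>c\<in>C. f c)"
  by (induction C rule: infinite_finite_induct) (auto simp: single_add)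

lemma main:
  fixes s :: "'a::field \<Rightarrow> 'a"
  assumes s0: "s 0 = 0" and sadd: "\<And>a b. s (a + b) = s a + s b"
    and smul: "\<And>a b. s (a * b) = s a * s b"
    and cs: "csoi s n t E" and al: "\<forall>i<t. \<alpha> i * s (\<alpha> i) = 1"
  shows "paraunitary s (Wmat n t k \<alpha> tt E)"
proof -
  define m where "m i = (\<Sum>j<k. Poly_Mapping.single j (int (tt i j)))" for i
  define W where "W = Wmat n t k \<alpha> tt E"
  have Ec: "\<And>i. i < t \<Longrightarrow> E i \<in> carrier_mat n n" and
    Esym: "\<And>i. i < t \<Longrightarrow> mstar s (E i) = E i" and
    Eidem: "\<And>i. i < t \<Longrightarrow> E i * E i = E i" and
    Eorth: "\<And>i j. i < t \<Longrightarrow> j < t \<Longrightarrow> i \<noteq> j \<Longrightarrow> E i * E j = 0\<^sub>m n n" and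
    Esum: "msum n t E = 1\<^sub>m n"
    using cs unfolding csoi_def by auto
  have Ed: "dim_row (E i) = n" "dim_col (E i) = n" if "i < t" for i
    using Ec[OF that] by auto
  have sE: "s (E i $$ (q, c)) = E i $$ (c, q)" if "i < t" "c < n" "q < n" for i c q
  proof -
    have "mstar s (E i) $$ (c, q) = s (E i $$ (q, c))"
      using Ec[OF \<open>i<t\<close>] that unfolding mstar_def by auto
    then show ?thesis using Esym[OF \<open>i<t\<close>] by simp
  qed
  have dimW: "dim_row W = n" "dim_col W = n"
    unfolding W_def Wmat_def msum_def by auto
  have Wij: "W $$ (r, c) = (\<Sum>i<t. Poly_Mapping.single (m i) (\<alpha> i * E i $$ (r, c)))"
    if "r < n" "c < n" for r c
    unfolding W_def Wmat_def msum_def using that Ec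
    by (auto intro!: sum.cong simp: Ed lmonom_def lconst_def mult_single m_def)
  define P where "P = paraconj s W"
  have dimP: "dim_row P = n" "dim_col P = n"
    unfolding P_def paraconj_def using dimW by auto
  have Pij: "P $$ (c, q) = (\<Sum>j<t. Poly_Mapping.single (- m j) (s (\<alpha> j) * E j $$ (c, q)))"
    if "c < n" "q < n" for c q
  proof -
    have "P $$ (c, q) = lconj s (W $$ (q, c))"
      unfolding P_def paraconj_def using dimW that by auto
    also have "\<dots> = (\<Sum>j<t. Poly_Mapping.single (- m j) (s (\<alpha> j * E j $$ (q, c))))"
      unfolding Wij[OF that(2,1)] by (rule lconj_sum_single[OF s0 sadd])
    also have "\<dots> = (\<Sum>j<t. Poly_Mapping.single (- m j) (s (\<alpha> j) * E j $$ (c, q)))"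
      using that by (intro sum.cong) (auto simp: smul sE)
    finally show ?thesis .
  qed
  have prod: "(W * P) $$ (r, q) = 1\<^sub>m n $$ (r, q)" if "r < n" "q < n" for r q
  proof -
    have "(W * P) $$ (r, q) = (\<Sum>c<n. W $$ (r, c) * P $$ (c, q))"
      using that dimW dimP by (auto simp: scalar_prod_def atLeast0LessThan intro!: sum.cong)
    also have "\<dots> = (\<Sum>c<n. \<Sum>i<t. \<Sum>j<t. Poly_Mapping.single (m i + - m j)
          (\<alpha> i * s (\<alpha> j) * (E i $$ (r, c) * E j $$ (c, q))))"
      using that by (simp add: Wij Pij sum_product mult_single mult.assoc mult.left_commute)
    also have "\<dots> = (\<Sum>i<t. \<Sum>j<t. Poly_Mapping.single (m i + - m j)
          (\<alpha> i * s (\<alpha> j) * (E i * E j) $$ (r, q)))"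
    proof -
      have "(\<Sum>c<n. \<Sum>i<t. \<Sum>j<t. Poly_Mapping.single (m i + - m j)
          (\<alpha> i * s (\<alpha> j) * (E i $$ (r, c) * E j $$ (c, q)))) =
          (\<Sum>i<t. \<Sum>j<t. \<Sum>c<n. Poly_Mapping.single (m i + - m j)
          (\<alpha> i * s (\<alpha> j) * (E i $$ (r, c) * E j $$ (c, q))))"
        by (subst sum.swap) (simp add: sum.swap[of _ "{..<n}"])
      also have "\<dots> = (\<Sum>i<t. \<Sum>j<t. Poly_Mapping.single (m i + - m j)
          (\<alpha> i * s (\<alpha> j) * (E i * E j) $$ (r, q)))"
      proof (intro sum.cong refl)
        fix i j assume "i \<in> {..<t}" "j \<in> {..<t}"
        then have "(E i * E j) $$ (r, q) = (\<Sum>c<n. E i $$ (r, c) * E j $$ (c, q))"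
          using Ed that by (auto simp: scalar_prod_def atLeast0LessThan intro!: sum.cong)
        then show "(\<Sum>c<n. Poly_Mapping.single (m i + - m j)
          (\<alpha> i * s (\<alpha> j) * (E i $$ (r, c) * E j $$ (c, q)))) =
          Poly_Mapping.single (m i + - m j) (\<alpha> i * s (\<alpha> j) * (E i * E j) $$ (r, q))"
          by (simp add: sum_single sum_distrib_left)
      qed
      finally show ?thesis .
    qed
    also have "\<dots> = (\<Sum>i<t. Poly_Mapping.single 0 (E i $$ (r, q)))"
    proof (intro sum.cong refl)
      fix i assume i: "i \<in> {..<t}"
      have "(\<Sum>j<t. Poly_Mapping.single (m i + - m j)
          (\<alpha> i * s (\<alpha> j) * (E i * E j) $$ (r, q))) =
          (\<Sum>j<t. if j = i then Poly_Mapping.single 0 (E i $$ (r, q)) else 0)"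
        using i that al Eidem Eorth by (intro sum.cong refl) auto
      also have "\<dots> = Poly_Mapping.single 0 (E i $$ (r, q))"
        using i by (simp add: sum.delta)
      finally show "(\<Sum>j<t. Poly_Mapping.single (m i + - m j)
          (\<alpha> i * s (\<alpha> j) * (E i * E j) $$ (r, q))) = Poly_Mapping.single 0 (E i $$ (r, q))" .
    qed
    also have "\<dots> = Poly_Mapping.single 0 (msum n t E $$ (r, q))"
      using that by (simp add: sum_single msum_def)
    also have "\<dots> = 1\<^sub>m n $$ (r, q)"
      using that by (simp add: Esum)
    finally show ?thesis .
  qed
  have "W * P = 1\<^sub>m n"
    by (rule eq_matI) (use prod dimW dimP in auto)
  then show ?thesis unfolding paraunitary_def W_def P_def using dimW W_def by simp
qed

theorem proposition14:
  shows "(\<forall>(n::nat) (t::nat) (k::nat) (E :: nat \<Rightarrow> 'a::field mat) (\<alpha> :: nat \<Rightarrow> 'a) (tt :: nat \<Rightarrow> nat \<Rightarrow> nat).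
            csoi id n t E \<and> (\<forall>i<t. \<alpha> i * id (\<alpha> i) = 1)
            \<longrightarrow> paraunitary id (Wmat n t k \<alpha> tt E))
       \<and> (\<forall>(n::nat) (t::nat) (k::nat) (E :: nat \<Rightarrow> complex mat) (\<alpha> :: nat \<Rightarrow> complex) (tt :: nat \<Rightarrow> nat \<Rightarrow> nat).
            csoi cnj n t E \<and> (\<forall>i<t. \<alpha> i * cnj (\<alpha> i) = 1)
            \<longrightarrow> paraunitary cnj (Wmat n t k \<alpha> tt E))"
  by (auto intro!: main)

end
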